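(* For every $d\ge 2$ there exists a constant $C$ such that for all $n\ge 2$ and all integers $k\ge 0$ the following holds: in a regular $d$-dimensional toroidal grid $(\mathbb{Z}/N\mathbb{Z})^d$ with $N^d\le n$ vertices, the number of subsets of size $k$ that have at most $\frac{k}{\log n}$ *-connected components is at most $C^k$.
   Context: Two vertices of the toroidal grid $(\mathbb{Z}/N\mathbb{Z})^d$ are *-adjacent if they are distinct and their $\ell_\infty$-distance (in the discrete torus) is at most $1$; *-connected components of a subset are its connected components with respect to *-adjacency. $\log$ is the natural logarithm. *)

theory Defs
  imports Complex_Main
begin

definition torus :: "nat \<Rightarrow> nat \<Rightarrow> nat list set" where
  "torus N d = {x. length x = d \<and> (\<forall>i<d. x ! i < N)}"

definition cyc_dist :: "nat \<Rightarrow> nat \<Rightarrow> nat \<Rightarrow> nat" where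
  "cyc_dist N a b = min (if a \<le> b then b - a else a - b) (N - (if a \<le> b then b - a else a - b))"

definition star_adj :: "nat \<Rightarrow> nat \<Rightarrow> nat list \<Rightarrow> nat list \<Rightarrow> bool" where
  "star_adj N d x y \<longleftrightarrow> x \<noteq> y \<and> (\<forall>i<d. cyc_dist N (x ! i) (y ! i) \<le> 1)"

definition star_components :: "nat \<Rightarrow> nat \<Rightarrow> nat list set \<Rightarrow> nat list set set" where
  "star_components N d S = S // ({(x, y). x \<in> S \<and> y \<in> S \<and> star_adj N d x y}\<^sup>*)"

end

theory Submission
  imports Defs
begin

fun run :: "('a \<Rightarrow> 'b \<Rightarrow> 'a) \<Rightarrow> 'a \<Rightarrow> 'a list \<Rightarrow> 'b option option list \<Rightarrow> 'a set" where
  "run nb cur rs [] = {}"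
| "run nb cur rs (None # ms) = run nb cur rs ms"
| "run nb cur rs (Some None # ms) = (case rs of [] \<Rightarrow> run nb cur [] ms | r # rs' \<Rightarrow> insert r (run nb r rs' ms))"
| "run nb cur rs (Some (Some b) # ms) = insert (nb cur b) (run nb (nb cur b) rs ms)"

fun visits :: "('a \<Rightarrow> 'b \<Rightarrow> 'a) \<Rightarrow> 'a \<Rightarrow> 'b list \<Rightarrow> 'a set" where
  "visits nb cur [] = {}"
| "visits nb cur (b # bs) = insert (nb cur b) (visits nb (nb cur b) bs)"

definition jumps :: "'b option option list \<Rightarrow> nat" where
  "jumps ms = length (filter (\<lambda>m. m = Some None) ms)"

lemma run_pad: "run nb cur rs (ms @ replicate j None) = run nb cur rs ms"
proof (induction nb cur rs ms rule: run.induct)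
  case (1 nb cur rs)
  then show ?case by (induction j) auto
qed (auto split: list.splits)

lemma run_extra: "jumps ms \<le> length rs \<Longrightarrow> run nb cur (rs @ ex) ms = run nb cur rs ms"
  by (induction nb cur rs ms rule: run.induct) (auto simp: jumps_def split: list.splits)

lemma run_walk: "\<exists>c'. run nb cur rs (map (Some \<circ> Some) bs @ ms) = visits nb cur bs \<union> run nb c' rs ms"
proof (induction bs arbitrary: cur)
  case Nil
  then show ?case by auto
next
  case (Cons b bs)
  obtain c' where "run nb (nb cur b) rs (map (Some \<circ> Some) bs @ ms) = visits nb (nb cur b) bs \<union> run nb c' rs ms"
    using Cons by blast
  then show ?case by (intro exI[of _ c']) (simp add: o_def)
qed

lemma walk_code:
  assumes "successively E (x # ws)" "set (x # ws) \<subseteq> S"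
    and step: "\<And>x y. x \<in> S \<Longrightarrow> y \<in> S \<Longrightarrow> E x y \<Longrightarrow> \<exists>b\<in>D. nb x b = y"
  shows "\<exists>bs. set bs \<subseteq> D \<and> length bs = length ws \<and> visits nb x bs = set ws"
  using assms(1,2)
proof (induction ws arbitrary: x)
  case Nil
  then show ?case by auto
next
  case (Cons y ws)
  have "E x y" using Cons.prems by (simp add: successively_Cons)
  then obtain b where b: "b \<in> D" "nb x b = y" using step Cons.prems by force
  have "successively E (y # ws)" using Cons.prems by (simp add: successively_Cons)
  moreover have "set (y # ws) \<subseteq> S" using Cons.prems by auto
  ultimately obtain bs where "set bs \<subseteq> D \<and> length bs = length ws \<and> visits nb y bs = set ws"
    using Cons.IH by blast
  then show ?case using b by (intro exI[of _ "b # bs"]) auto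
qed

lemma path_exit:
  assumes "(r, z) \<in> R\<^sup>*" "r \<in> T"
  shows "z \<in> T \<or> (\<exists>x y. y \<in> T \<and> x \<notin> T \<and> (y, x) \<in> R \<and> (r, x) \<in> R\<^sup>*)"
  using assms(1)
proof (induction rule: rtrancl_induct)
  case base
  then show ?case using assms(2) by simp
next
  case (step y z)
  then show ?case by (meson rtrancl.rtrancl_into_rtrancl)
qed

lemma walk_exists:
  fixes S :: "'a set"
  assumes fin: "finite S" and symE: "\<And>x y. E x y \<Longrightarrow> E y x" and r: "r \<in> S"
  defines "R \<equiv> {(x,y). x \<in> S \<and> y \<in> S \<and> E x y}"
  shows "\<exists>w. w \<noteq> [] \<and> hd w = r \<and> set w = R\<^sup>*``{r} \<and> length w \<le> 2 * card (R\<^sup>*``{r}) - 1 \<and> successively E w"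
proof -
  define K where "K = R\<^sup>*``{r}"
  have KS: "K \<subseteq> S"
  proof
    fix z assume "z \<in> K"
    then have "(r, z) \<in> R\<^sup>*" by (simp add: K_def)
    then show "z \<in> S" using r by (induction rule: rtrancl_induct) (auto simp: R_def)
  qed
  have finK: "finite K" using KS fin finite_subset by blast
  have rK: "r \<in> K" by (simp add: K_def)
  have grow: "\<And>j. 1 \<le> j \<Longrightarrow> j \<le> card K \<Longrightarrow> \<exists>w. w \<noteq> [] \<and> hd w = r \<and> set w \<subseteq> K \<and> card (set w) = j \<and> length w \<le> 2 * j - 1 \<and> successively E w"
  proof -
    fix j :: nat
    show "1 \<le> j \<Longrightarrow> j \<le> card K \<Longrightarrow> \<exists>w. w \<noteq> [] \<and> hd w = r \<and> set w \<subseteq> K \<and> card (set w) = j \<and> length w \<le> 2 * j - 1 \<and> successively E w"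
    proof (induction j)
      case 0
      then show ?case by simp
    next
      case (Suc j)
      show ?case
      proof (cases "j = 0")
        case True
        then show ?thesis using rK by (intro exI[of _ "[r]"]) auto
      next
        case False
        then obtain w where w: "w \<noteq> []" "hd w = r" "set w \<subseteq> K" "card (set w) = j" "length w \<le> 2 * j - 1" "successively E w"
          using Suc by auto
        have "set w \<noteq> K"
        proof
          assume "set w = K"
          then show False using w(4) Suc.prems(2) by simp
        qed
        then obtain z where z: "z \<in> K" "z \<notin> set w" using w(3) by auto
        have rw: "r \<in> set w" using w(1,2) hd_in_set by blast
        from path_exit[of r z R "set w"] z rw
        obtain x y where xy: "y \<in> set w" "x \<notin> set w" "(y, x) \<in> R" "(r, x) \<in> R\<^sup>*"
          by (auto simp: K_def)
        have Eyx: "E y x" "E x y" using xy(3) symE by (auto simp: R_def)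
        have xK: "x \<in> K" using xy(4) by (simp add: K_def)
        obtain xs ys where wsplit: "w = xs @ y # ys" using xy(1) split_list by metis
        define w' where "w' = xs @ y # x # y # ys"
        have s': "set w' = insert x (set w)" using wsplit by (auto simp: w'_def)
        have "hd w' = r" using w(2) wsplit by (cases xs) (auto simp: w'_def)
        moreover have "length w' = length w + 2" using wsplit by (simp add: w'_def)
        moreover have "successively E w'"
          using w(6) Eyx unfolding wsplit w'_def
          by (auto simp: successively_append_iff successively_Cons)
        moreover have "card (set w') = Suc j" using s' w(4) xy(2) by simp
        moreover have "set w' \<subseteq> K" using s' w(3) xK by auto
        ultimately show ?thesis using w False
          by (intro exI[of _ w']) (auto simp: w'_def)
      qed
    qed
  qed
  have "card K \<noteq> 0" using finK rK by auto
  then have "1 \<le> card K" by simp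
  from grow[OF this order.refl] obtain w where w: "w \<noteq> []" "hd w = r" "set w \<subseteq> K" "card (set w) = card K"
    "length w \<le> 2 * card K - 1" "successively E w" by blast
  have "set w = K" using w(3,4) finK card_subset_eq by blast
  then show ?thesis unfolding K_def[symmetric] using w by blast
qed

lemma comps_code:
  fixes S :: "'a set"
  assumes fin: "finite S" and symE: "\<And>x y. E x y \<Longrightarrow> E y x"
    and step: "\<And>x y. x \<in> S \<Longrightarrow> y \<in> S \<Longrightarrow> E x y \<Longrightarrow> \<exists>b\<in>D. nb x b = y"
  defines "R \<equiv> {(x,y). x \<in> S \<and> y \<in> S \<and> E x y}"
  shows "\<exists>rs ms. length rs = card (S // R\<^sup>*) \<and> jumps ms = length rs \<and> length ms \<le> 2 * card S
     \<and> set rs \<subseteq> S \<and> set ms \<subseteq> insert None (insert (Some None) (Some ` Some ` D))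
     \<and> (\<forall>cur. run nb cur rs ms = S)"
proof -
  define P where "P = S // R\<^sup>*"
  define A where "A = insert None (insert (Some None) (Some ` Some ` D))"
  have reachS: "(a, z) \<in> R\<^sup>* \<Longrightarrow> a \<in> S \<Longrightarrow> z \<in> S" for a z
    by (induction rule: rtrancl_induct) (auto simp: R_def)
  have Pim: "P = (\<lambda>x. R\<^sup>*``{x}) ` S" by (auto simp: P_def quotient_def)
  have finP: "finite P" using Pim fin by simp
  have UP: "\<Union>P = S" using reachS by (auto simp: Pim)
  have symR: "sym (R\<^sup>*)" by (rule sym_rtrancl) (auto simp: sym_def R_def symE)
  have disj: "K \<in> P \<Longrightarrow> K' \<in> P \<Longrightarrow> K \<noteq> K' \<Longrightarrow> K \<inter> K' = {}" for K K'
  proof (rule ccontr)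
    assume "K \<in> P" "K' \<in> P" "K \<noteq> K'" "K \<inter> K' \<noteq> {}"
    then obtain a b z where ab: "K = R\<^sup>*``{a}" "K' = R\<^sup>*``{b}" "(a, z) \<in> R\<^sup>*" "(b, z) \<in> R\<^sup>*"
      by (auto simp: Pim)
    have "(z, b) \<in> R\<^sup>*" using ab(4) symR by (meson symD)
    then have ab1: "(a, b) \<in> R\<^sup>*" using ab(3) by simp
    then have "(b, a) \<in> R\<^sup>*" using symR by (meson symD)
    then have "K = K'" using ab1 unfolding ab(1,2)
      by (auto intro: rtrancl_trans)
    then show False using \<open>K \<noteq> K'\<close> by simp
  qed
  have main: "F \<subseteq> P \<Longrightarrow> \<exists>rs ms. length rs = card F \<and> jumps ms = length rs \<and> length ms \<le> 2 * card (\<Union>F)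
     \<and> set rs \<subseteq> \<Union>F \<and> set ms \<subseteq> A \<and> (\<forall>cur. run nb cur rs ms = \<Union>F)" for F
  proof -
    assume "F \<subseteq> P"
    have "finite F" using \<open>F \<subseteq> P\<close> finP finite_subset by blast
    then show ?thesis using \<open>F \<subseteq> P\<close>
    proof (induction F rule: finite_induct)
      case empty
      then show ?case by (intro exI[of _ "[]"]) (auto simp: jumps_def)
    next
      case (insert K F)
      then obtain rs ms where IH: "length rs = card F" "jumps ms = length rs" "length ms \<le> 2 * card (\<Union>F)"
        "set rs \<subseteq> \<Union>F" "set ms \<subseteq> A" "\<And>cur. run nb cur rs ms = \<Union>F" by auto
      have KP: "K \<in> P" using insert by auto
      then obtain r where r: "r \<in> S" "K = R\<^sup>*``{r}" by (auto simp: Pim)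
      have W: "\<exists>w. w \<noteq> [] \<and> hd w = r \<and> set w = K \<and> length w \<le> 2 * card K - 1 \<and> successively E w"
        unfolding r(2) R_def by (rule walk_exists[OF fin symE r(1)])
      obtain w where w: "w \<noteq> []" "hd w = r" "set w = K" "length w \<le> 2 * card K - 1" "successively E w"
        using W by blast
      obtain ws where wws: "w = r # ws" using w(1,2) by (cases w) auto
      have KS: "K \<subseteq> S" using UP KP by blast
      obtain bs where bs: "set bs \<subseteq> D" "length bs = length ws" "visits nb r bs = set ws"
        using walk_code[of E r ws S D nb] w(5) w(3) KS wws step by auto
      define rs' where "rs' = r # rs"
      define ms' where "ms' = Some None # map (Some \<circ> Some) bs @ ms"
      have "\<Union>F \<subseteq> S" using insert.prems UP by blast
      then have finU: "finite (\<Union>F)" using fin finite_subset by blast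
      have finK: "finite K" using KS fin finite_subset by blast
      have dj: "K \<inter> \<Union>F = {}"
      proof -
        have "K \<inter> K' = {}" if "K' \<in> F" for K'
          using disj[OF KP, of K'] insert.prems insert.hyps(2) that by auto
        then show ?thesis by blast
      qed
      have cardU: "card (\<Union>(insert K F)) = card K + card (\<Union>F)"
        using card_Un_disjoint[OF finK finU dj] by simp
      have run': "run nb cur rs' ms' = \<Union>(insert K F)" for cur
      proof -
        obtain c' where "run nb r rs (map (Some \<circ> Some) bs @ ms) = visits nb r bs \<union> run nb c' rs ms"
          using run_walk[of nb r rs bs ms] by blast
        then show ?thesis using bs(3) IH(6) w(3) wws by (auto simp: rs'_def ms'_def)
      qed
      have "jumps ms' = length rs'" using IH(2) by (simp add: jumps_def rs'_def ms'_def o_def)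
      moreover have "length ms' \<le> 2 * card (\<Union>(insert K F))"
        using IH(3) bs(2) w(4) wws cardU by (simp add: ms'_def)
      moreover have "length rs' = card (insert K F)" using IH(1) insert.hyps by (simp add: rs'_def)
      moreover have "set rs' \<subseteq> \<Union>(insert K F)" using IH(4) r(2) by (auto simp: rs'_def)
      moreover have "set ms' \<subseteq> A" using IH(5) bs(1) by (auto simp: ms'_def A_def)
      ultimately show ?case using run' by blast
    qed
  qed
  from main[OF order.refl] show ?thesis unfolding UP by (simp add: P_def A_def)
qed


definition stp :: "nat \<Rightarrow> nat list \<Rightarrow> nat list \<Rightarrow> nat list" where
  "stp N x e = map (\<lambda>i. (x ! i + e ! i + N - 1) mod N) [0..<length x]"

definition Dl :: "nat \<Rightarrow> nat list set" where
  "Dl d = {e. set e \<subseteq> {..<3} \<and> length e = d}"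

lemma cyc_step:
  assumes "a < N" "b < N" "cyc_dist N a b \<le> 1"
  shows "\<exists>e<3. (a + e + N - 1) mod N = b"
proof (cases "b = a")
  case True
  then show ?thesis using assms by (intro exI[of _ 1]) auto
next
  case False
  show ?thesis
  proof (cases "a \<le> b")
    case True
    then have "b - a \<le> 1 \<or> N - (b - a) \<le> 1" using assms(3) by (auto simp: cyc_dist_def)
    then show ?thesis
    proof
      assume "b - a \<le> 1"
      then have "b = a + 1" using True False by auto
      then have e: "a + 2 + N - 1 = b + N" by simp
      have "(a + 2 + N - 1) mod N = b" unfolding e using assms(2) by simp
      then show ?thesis by (intro exI[of _ 2]) auto
    next
      assume "N - (b - a) \<le> 1"
      then have "a = 0" "b = N - 1" using True False assms by auto
      then show ?thesis using assms by (intro exI[of _ 0]) auto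
    qed
  next
    case nle: False
    then have "a - b \<le> 1 \<or> N - (a - b) \<le> 1" using assms(3) by (auto simp: cyc_dist_def)
    then show ?thesis
    proof
      assume "a - b \<le> 1"
      then have "a = b + 1" using nle by auto
      then have "a + 0 + N - 1 = b + N" by simp
      then show ?thesis using assms by (intro exI[of _ 0]) auto
    next
      assume "N - (a - b) \<le> 1"
      then have "b = 0" "a = N - 1" using nle assms by auto
      then show ?thesis using assms by (intro exI[of _ 2]) auto
    qed
  qed
qed

lemma adj_step:
  assumes "x \<in> torus N d" "y \<in> torus N d" "star_adj N d x y"
  shows "\<exists>e\<in>Dl d. stp N x e = y"
proof -
  have "\<forall>i<d. \<exists>e<3. (x ! i + e + N - 1) mod N = y ! i"
    using assms cyc_step by (auto simp: torus_def star_adj_def)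
  then obtain f where f: "\<And>i. i < d \<Longrightarrow> f i < 3 \<and> (x ! i + f i + N - 1) mod N = y ! i"
    by metis
  define e where "e = map f [0..<d]"
  have "e \<in> Dl d" using f by (auto simp: Dl_def e_def)
  moreover have "stp N x e = y"
    using f assms(1,2) by (auto simp: stp_def e_def torus_def intro!: nth_equalityI)
  ultimately show ?thesis by blast
qed

lemma cyc_sym: "cyc_dist N a b = cyc_dist N b a"
  by (auto simp: cyc_dist_def)

lemma adj_sym: "star_adj N d x y \<Longrightarrow> star_adj N d y x"
  by (auto simp: star_adj_def cyc_sym)

lemma torus_lists: "torus N d = {xs. set xs \<subseteq> {..<N} \<and> length xs = d}"
  by (auto simp: torus_def in_set_conv_nth) (meson lessThan_iff nth_mem subsetD)

lemma card_torus: "card (torus N d) = N ^ d"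
  unfolding torus_lists by (simp add: card_lists_length_eq)

lemma finite_torus: "finite (torus N d)"
  unfolding torus_lists by (simp add: finite_lists_length_eq)

lemma card_Dl: "card (Dl d) = 3 ^ d"
  unfolding Dl_def by (simp add: card_lists_length_eq)

lemma finite_Dl: "finite (Dl d)"
  unfolding Dl_def by (simp add: finite_lists_length_eq)


lemma count_bound:
  fixes d N k L :: nat
  assumes N1: "N \<ge> 1"
  defines "Sset \<equiv> {S. S \<subseteq> torus N d \<and> card S = k \<and> card (star_components N d S) \<le> L}"
  shows "card Sset \<le> (N ^ d) ^ L * (3 ^ d + 2) ^ (2 * k)"
proof -
  define T where "T = torus N d"
  define A :: "nat list option option set" where "A = insert None (insert (Some None) (Some ` Some ` Dl d))"
  define RS where "RS = {rs. set rs \<subseteq> T \<and> length rs = L}"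
  define MS where "MS = {ms. set ms \<subseteq> A \<and> length ms = 2 * k}"
  define x0 :: "nat list" where "x0 = replicate d 0"
  have x0T: "x0 \<in> T" using N1 by (auto simp: T_def x0_def torus_def)
  have finA: "finite A" using finite_Dl by (simp add: A_def)
  have cardA: "card A \<le> 3 ^ d + 2"
  proof -
    have "card (Some ` Some ` Dl d) = 3 ^ d"
      by (simp add: card_image card_Dl inj_on_def)
    then show ?thesis unfolding A_def
      by (metis (no_types, lifting) add_2_eq_Suc' finA A_def finite_insert
          card_insert_if le_SucI order_refl Suc_le_mono)
  qed
  have sub: "Sset \<subseteq> (\<lambda>(rs, ms). run (stp N) x0 rs ms) ` (RS \<times> MS)"
  proof
    fix S assume "S \<in> Sset"
    then have S: "S \<subseteq> T" "card S = k" "card (star_components N d S) \<le> L"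
      by (auto simp: Sset_def T_def)
    have finS: "finite S" using S(1) finite_torus[of N d] unfolding T_def by (rule finite_subset)
    have step: "\<And>x y. x \<in> S \<Longrightarrow> y \<in> S \<Longrightarrow> star_adj N d x y \<Longrightarrow> \<exists>b\<in>Dl d. stp N x b = y"
      using adj_step S(1) unfolding T_def by blast
    obtain rs ms where rm: "length rs = card (star_components N d S)" "jumps ms = length rs"
      "length ms \<le> 2 * card S" "set rs \<subseteq> S" "set ms \<subseteq> A" "\<And>cur. run (stp N) cur rs ms = S"
      using comps_code[of S "star_adj N d" "Dl d" "stp N", OF finS adj_sym step]
      unfolding star_components_def A_def by blast
    define rs' where "rs' = rs @ replicate (L - length rs) x0"
    define ms' where "ms' = ms @ replicate (2 * k - length ms) None"
    have "run (stp N) x0 rs' ms' = S"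
      unfolding rs'_def ms'_def run_pad using run_extra[OF eq_imp_le[OF rm(2)]] rm(6) by simp
    moreover have "rs' \<in> RS" using rm S x0T by (auto simp: RS_def rs'_def)
    moreover have "ms' \<in> MS" using rm S by (auto simp: MS_def ms'_def A_def)
    ultimately show "S \<in> (\<lambda>(rs, ms). run (stp N) x0 rs ms) ` (RS \<times> MS)" by force
  qed
  have finRS: "finite RS" unfolding RS_def T_def using finite_torus by (simp add: finite_lists_length_eq)
  have finMS: "finite MS" unfolding MS_def using finA by (simp add: finite_lists_length_eq)
  have "card Sset \<le> card ((\<lambda>(rs, ms). run (stp N) x0 rs ms) ` (RS \<times> MS))"
    using sub finRS finMS by (intro card_mono) auto
  also have "\<dots> \<le> card (RS \<times> MS)" by (rule card_image_le) (use finRS finMS in auto)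
  also have "\<dots> = card RS * card MS" by (simp add: card_cartesian_product)
  also have "card RS = (N ^ d) ^ L" unfolding RS_def T_def
    by (simp add: card_lists_length_eq[OF finite_torus] card_torus)
  also have "card MS = card A ^ (2 * k)" unfolding MS_def using card_lists_length_eq[OF finA] by simp
  also have "(N ^ d) ^ L * card A ^ (2 * k) \<le> (N ^ d) ^ L * (3 ^ d + 2) ^ (2 * k)"
    using cardA by (intro mult_le_mono2 power_mono) auto
  finally show ?thesis .
qed

theorem claim3p4:
  fixes d :: nat
  assumes "d \<ge> 2"
  shows "\<exists>C::real. \<forall>n::nat. \<forall>k::nat. \<forall>N::nat.
           n \<ge> 2 \<longrightarrow> N \<ge> 1 \<longrightarrow> N ^ d \<le> n \<longrightarrow>
           real (card {S. S \<subseteq> torus N d \<and> card S = k \<and>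
                        real (card (star_components N d S)) \<le> real k / ln (real n)})
             \<le> C ^ k"
proof (intro exI allI impI)
  fix n k N :: nat
  assume n2: "n \<ge> 2" and N1: "N \<ge> 1" and Nn: "N ^ d \<le> n"
  define L where "L = nat \<lfloor>real k / ln (real n)\<rfloor>"
  have lnpos: "ln (real n) > 0" using n2 by simp
  have kl: "real k / ln (real n) \<ge> 0" using lnpos by simp
  have seteq: "{S. S \<subseteq> torus N d \<and> card S = k \<and> real (card (star_components N d S)) \<le> real k / ln (real n)}
      = {S. S \<subseteq> torus N d \<and> card S = k \<and> card (star_components N d S) \<le> L}"
  proof -
    have "real c \<le> real k / ln (real n) \<longleftrightarrow> c \<le> L" for c :: nat
    proof -
      have "c \<le> L \<longleftrightarrow> int c \<le> \<lfloor>real k / ln (real n)\<rfloor>" unfolding L_def using kl by (simp add: le_nat_iff)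
      also have "\<dots> \<longleftrightarrow> real c \<le> real k / ln (real n)" by (simp add: le_floor_iff)
      finally show ?thesis by simp
    qed
    then show ?thesis by simp
  qed
  have Lle: "real L * ln (real n) \<le> real k"
  proof -
    have "real L \<le> real k / ln (real n)" unfolding L_def using kl by linarith
    then show ?thesis using lnpos by (simp add: pos_le_divide_eq)
  qed
  have "real (card {S. S \<subseteq> torus N d \<and> card S = k \<and> card (star_components N d S) \<le> L})
        \<le> real ((N ^ d) ^ L * (3 ^ d + 2) ^ (2 * k))"
    by (rule of_nat_mono) (rule count_bound[OF N1])
  also have "\<dots> = real (N ^ d) ^ L * ((real 3 ^ d + 2) ^ 2) ^ k"
    by (simp add: power_mult add.commute)
  also have "\<dots> \<le> exp 1 ^ k * ((real 3 ^ d + 2) ^ 2) ^ k"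
  proof (rule mult_right_mono)
    have "real (N ^ d) ^ L \<le> real n ^ L" using Nn by (intro power_mono) auto
    also have "\<dots> = exp (real L * ln (real n))"
      using n2 by (simp add: exp_of_nat_mult)
    also have "\<dots> \<le> exp (real k)" using Lle by simp
    also have "\<dots> = exp 1 ^ k" by (simp add: exp_of_nat_mult[symmetric])
    finally show "real (N ^ d) ^ L \<le> exp 1 ^ k" .
  qed simp
  also have "\<dots> = (exp 1 * (real 3 ^ d + 2) ^ 2) ^ k" by (simp add: power_mult_distrib)
  finally show "real (card {S. S \<subseteq> torus N d \<and> card S = k \<and>
                        real (card (star_components N d S)) \<le> real k / ln (real n)})
             \<le> (exp 1 * (real 3 ^ d + 2) ^ 2) ^ k" unfolding seteq .
qed

end
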